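(* Let $0<b<1$, let $\mu,\nu$ be the Gibbs distributions of two soft-hardcore models $(G,\lambda^\mu),(G,\lambda^\nu)$ on $G=(V,E)$ with $n=|V|$, both $b$-marginally bounded, with $d_{\mathrm{par}}(\mu,\nu)\le\theta:=\frac{b}{2(1-b)n}$. Let $C=b^3$. Then: (i) for all $\sigma$, $\mu(\sigma)=0$ implies $\nu(\sigma)=0$; (ii) $\sqrt{\mathrm{Var}[W]}\le K\,d_{TV}(\mu,\nu)$ with $K=\frac{4n}{bC}$; (iii) $\mathbb{E}[W]\ge\frac1L$ with $L=2$; where $W=\frac{w_\nu(\sigma)}{w_\mu(\sigma)}$ with $\sigma\sim\mu$.
   Context: Hardcore model $(G,\lambda)$: weight $w(\sigma)=\prod_{v:\sigma_v=+1}\lambda_v$ for $\sigma\in\{-1,+1\}^V$ with $\{v:\sigma_v=+1\}$ independent in $G$, else $0$; Gibbs distribution is $w/Z$. Soft: $\lambda_v>0$ for all $v$. $d_{\mathrm{par}}(\mu,\nu)=\max_v|\lambda^\mu_v-\lambda^\nu_v|$. $b$-marginally bounded: for every $\Lambda\subseteq V$, feasible $\sigma\in\{\pm1\}^\Lambda$, $v\in V$, $c\in\{\pm1\}$, $\mu^\sigma_v(c)>0$ implies $\mu^\sigma_v(c)\ge b$ ($\mu^\sigma_v$ = marginal at $v$ of $\mu$ conditioned on $\sigma$). *)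

theory Defs
  imports "HOL-Analysis.Analysis"
begin

definition configs :: "'a set \<Rightarrow> ('a \<Rightarrow> int) set" where
  "configs V = PiE V (\<lambda>_. {-1, 1})"

definition occupied :: "'a set \<Rightarrow> ('a \<Rightarrow> int) \<Rightarrow> 'a set" where
  "occupied V \<sigma> = {v \<in> V. \<sigma> v = 1}"

definition independent :: "('a \<Rightarrow> 'a \<Rightarrow> bool) \<Rightarrow> 'a set \<Rightarrow> bool" where
  "independent E S \<longleftrightarrow> (\<forall>u\<in>S. \<forall>v\<in>S. \<not> E u v)"

definition hc_weight :: "'a set \<Rightarrow> ('a \<Rightarrow> 'a \<Rightarrow> bool) \<Rightarrow> ('a \<Rightarrow> real) \<Rightarrow> ('a \<Rightarrow> int) \<Rightarrow> real" where
  "hc_weight V E lam \<sigma> =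
     (if independent E (occupied V \<sigma>) then (\<Prod>v\<in>occupied V \<sigma>. lam v) else 0)"

definition partition_fn :: "'a set \<Rightarrow> ('a \<Rightarrow> 'a \<Rightarrow> bool) \<Rightarrow> ('a \<Rightarrow> real) \<Rightarrow> real" where
  "partition_fn V E lam = (\<Sum>\<sigma>\<in>configs V. hc_weight V E lam \<sigma>)"

definition gibbs :: "'a set \<Rightarrow> ('a \<Rightarrow> 'a \<Rightarrow> bool) \<Rightarrow> ('a \<Rightarrow> real) \<Rightarrow> ('a \<Rightarrow> int) \<Rightarrow> real" where
  "gibbs V E lam \<sigma> = hc_weight V E lam \<sigma> / partition_fn V E lam"

definition soft :: "'a set \<Rightarrow> ('a \<Rightarrow> real) \<Rightarrow> bool" where
  "soft V lam \<longleftrightarrow> (\<forall>v\<in>V. lam v > 0)"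

definition prob_ev :: "'a set \<Rightarrow> (('a \<Rightarrow> int) \<Rightarrow> real) \<Rightarrow> (('a \<Rightarrow> int) \<Rightarrow> bool) \<Rightarrow> real" where
  "prob_ev V p P = (\<Sum>\<sigma>\<in>{\<sigma>\<in>configs V. P \<sigma>}. p \<sigma>)"

definition agrees :: "'a set \<Rightarrow> ('a \<Rightarrow> int) \<Rightarrow> ('a \<Rightarrow> int) \<Rightarrow> bool" where
  "agrees \<Lambda> \<tau> \<sigma> \<longleftrightarrow> (\<forall>u\<in>\<Lambda>. \<sigma> u = \<tau> u)"

definition feasible :: "'a set \<Rightarrow> (('a \<Rightarrow> int) \<Rightarrow> real) \<Rightarrow> 'a set \<Rightarrow> ('a \<Rightarrow> int) \<Rightarrow> bool" where
  "feasible V p \<Lambda> \<tau> \<longleftrightarrow> prob_ev V p (agrees \<Lambda> \<tau>) > 0"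

definition cond_marginal ::
  "'a set \<Rightarrow> (('a \<Rightarrow> int) \<Rightarrow> real) \<Rightarrow> 'a set \<Rightarrow> ('a \<Rightarrow> int) \<Rightarrow> 'a \<Rightarrow> int \<Rightarrow> real" where
  "cond_marginal V p \<Lambda> \<tau> v c =
     prob_ev V p (\<lambda>\<sigma>. agrees \<Lambda> \<tau> \<sigma> \<and> \<sigma> v = c) / prob_ev V p (agrees \<Lambda> \<tau>)"

definition marginally_bounded :: "'a set \<Rightarrow> (('a \<Rightarrow> int) \<Rightarrow> real) \<Rightarrow> real \<Rightarrow> bool" where
  "marginally_bounded V p b \<longleftrightarrow>
     (\<forall>\<Lambda> \<tau> v c. \<Lambda> \<subseteq> V \<longrightarrow> \<tau> \<in> PiE \<Lambda> (\<lambda>_. {-1, 1}) \<longrightarrow> feasible V p \<Lambda> \<tau> \<longrightarrow>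
        v \<in> V \<longrightarrow> c \<in> {-1, 1} \<longrightarrow>
        cond_marginal V p \<Lambda> \<tau> v c > 0 \<longrightarrow> cond_marginal V p \<Lambda> \<tau> v c \<ge> b)"

definition d_par :: "'a set \<Rightarrow> ('a \<Rightarrow> real) \<Rightarrow> ('a \<Rightarrow> real) \<Rightarrow> real" where
  "d_par V lam1 lam2 = Max ((\<lambda>v. \<bar>lam1 v - lam2 v\<bar>) ` V)"

definition d_tv :: "'a set \<Rightarrow> (('a \<Rightarrow> int) \<Rightarrow> real) \<Rightarrow> (('a \<Rightarrow> int) \<Rightarrow> real) \<Rightarrow> real" where
  "d_tv V p q = (1/2) * (\<Sum>\<sigma>\<in>configs V. \<bar>p \<sigma> - q \<sigma>\<bar>)"

text \<open>Expectation and variance of a random variable X with sigma ~ p, summed over the support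
  of p (X need only be defined there).\<close>
definition expect :: "'a set \<Rightarrow> (('a \<Rightarrow> int) \<Rightarrow> real) \<Rightarrow> (('a \<Rightarrow> int) \<Rightarrow> real) \<Rightarrow> real" where
  "expect V p X = (\<Sum>\<sigma>\<in>{\<sigma>\<in>configs V. p \<sigma> > 0}. p \<sigma> * X \<sigma>)"

definition variance :: "'a set \<Rightarrow> (('a \<Rightarrow> int) \<Rightarrow> real) \<Rightarrow> (('a \<Rightarrow> int) \<Rightarrow> real) \<Rightarrow> real" where
  "variance V p X = expect V p (\<lambda>\<sigma>. (X \<sigma> - expect V p X)^2)"

end

theory Submission imports Defs begin

lemma occ_sub: "occupied V \<sigma> \<subseteq> V" by (auto simp: occupied_def)

lemma fin_configs: "finite V \<Longrightarrow> finite (configs V)"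
  unfolding configs_def by (rule finite_PiE) auto

lemma w_nonneg: "soft V lam \<Longrightarrow> hc_weight V E lam \<sigma> \<ge> 0"
  unfolding hc_weight_def soft_def occupied_def
  by (auto intro!: prod_nonneg simp: less_imp_le)

lemma w_pos: "soft V lam \<Longrightarrow> independent E (occupied V \<sigma>) \<Longrightarrow> hc_weight V E lam \<sigma> > 0"
  unfolding hc_weight_def soft_def occupied_def
  by (auto intro!: prod_pos)

lemma w_zero: "\<not> independent E (occupied V \<sigma>) \<Longrightarrow> hc_weight V E lam \<sigma> = 0"
  unfolding hc_weight_def by simp

definition s0 :: "'a set \<Rightarrow> 'a \<Rightarrow> int" where
  "s0 V = (\<lambda>u. if u \<in> V then -1 else undefined)"

lemma s0_configs: "s0 V \<in> configs V"
  unfolding configs_def s0_def by (auto simp: PiE_iff extensional_def)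

lemma s0_occ: "occupied V (s0 V) = {}"
  unfolding occupied_def s0_def by auto

lemma s1_configs: "v \<in> V \<Longrightarrow> (s0 V)(v := 1) \<in> configs V"
  unfolding configs_def s0_def by (auto simp: PiE_iff extensional_def)

lemma s1_occ: "v \<in> V \<Longrightarrow> occupied V ((s0 V)(v := 1)) = {v}"
  unfolding occupied_def s0_def by auto

lemma w_s0: "hc_weight V E lam (s0 V) = 1"
  unfolding hc_weight_def s0_occ independent_def by simp

lemma w_s1: "v \<in> V \<Longrightarrow> (\<And>v. \<not> E v v) \<Longrightarrow> hc_weight V E lam ((s0 V)(v := 1)) = lam v"
  unfolding hc_weight_def by (simp add: s1_occ independent_def)

lemma Z_ge1:
  assumes "finite V" "soft V lam"
  shows "partition_fn V E lam \<ge> 1"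
proof -
  have "hc_weight V E lam (s0 V) \<le> partition_fn V E lam"
    unfolding partition_fn_def
    by (rule member_le_sum) (use assms s0_configs w_nonneg fin_configs in auto)
  then show ?thesis by (simp add: w_s0)
qed

lemma gibbs_nonneg: "finite V \<Longrightarrow> soft V lam \<Longrightarrow> gibbs V E lam \<sigma> \<ge> 0"
  unfolding gibbs_def using Z_ge1[of V lam E] w_nonneg[of V lam E \<sigma>] by simp

lemma gibbs_pos_iff: "finite V \<Longrightarrow> soft V lam \<Longrightarrow> gibbs V E lam \<sigma> > 0 \<longleftrightarrow> independent E (occupied V \<sigma>)"
  unfolding gibbs_def using Z_ge1[of V lam E] w_pos[of V lam E \<sigma>] w_zero[of E V \<sigma> lam]
  by (cases "independent E (occupied V \<sigma>)") auto

lemma gibbs_sum: "finite V \<Longrightarrow> soft V lam \<Longrightarrow> (\<Sum>\<sigma>\<in>configs V. gibbs V E lam \<sigma>) = 1"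
  unfolding gibbs_def using Z_ge1[of V lam E]
  by (simp add: sum_divide_distrib[symmetric] partition_fn_def)

lemma lam_bounds:
  assumes finV: "finite V" and irr: "\<And>v. \<not> E v v" and sf: "soft V lam"
    and mb: "marginally_bounded V (gibbs V E lam) b" and v: "v \<in> V"
  shows "b * (1 + lam v) \<le> lam v" "b * (1 + lam v) \<le> 1"
proof -
  define p where "p = gibbs V E lam"
  define Z where "Z = partition_fn V E lam"
  have Z: "Z \<ge> 1" using Z_ge1[OF finV sf] Z_def by simp
  define \<tau> where "\<tau> = restrict (\<lambda>_. -1::int) (V - {v})"
  have tau: "\<tau> \<in> PiE (V - {v}) (\<lambda>_. {-1, 1})" unfolding \<tau>_def by auto
  have lv: "lam v > 0" using sf v by (auto simp: soft_def)
  let ?s0 = "s0 V" and ?s1 = "(s0 V)(v := 1)"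
  have ne: "?s0 \<noteq> ?s1" proof assume "?s0 = ?s1" then have "?s0 v = ?s1 v" by simp then show False using v by (simp add: s0_def) qed
  have A: "{\<sigma>\<in>configs V. agrees (V - {v}) \<tau> \<sigma>} = {?s0, ?s1}"
  proof (intro equalityI subsetI)
    fix \<sigma> assume "\<sigma> \<in> {\<sigma>\<in>configs V. agrees (V - {v}) \<tau> \<sigma>}"
    then have c: "\<sigma> \<in> configs V" and ag: "\<forall>u\<in>V-{v}. \<sigma> u = -1"
      by (auto simp: agrees_def \<tau>_def)
    from c have ext: "\<forall>u. u \<notin> V \<longrightarrow> \<sigma> u = undefined" and sv: "\<sigma> v \<in> {-1,1}"
      using v by (auto simp: configs_def PiE_iff extensional_def)
    show "\<sigma> \<in> {?s0, ?s1}"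
    proof (cases "\<sigma> v = 1")
      case True
      then have "\<sigma> = ?s1" using ext ag by (auto simp: s0_def fun_eq_iff)
      then show ?thesis by simp
    next
      case False
      then have "\<sigma> = ?s0" using ext ag sv by (auto simp: s0_def fun_eq_iff)
      then show ?thesis by simp
    qed
  next
    fix \<sigma> assume "\<sigma> \<in> {?s0, ?s1}"
    moreover have "agrees (V - {v}) \<tau> ?s0" "agrees (V - {v}) \<tau> ?s1"
      by (auto simp: agrees_def \<tau>_def s0_def)
    ultimately show "\<sigma> \<in> {\<sigma>\<in>configs V. agrees (V - {v}) \<tau> \<sigma>}"
      using s0_configs s1_configs[OF v] by auto
  qed
  have A1: "{\<sigma>\<in>configs V. agrees (V - {v}) \<tau> \<sigma> \<and> \<sigma> v = 1} = {?s1}"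
  proof -
    have "{\<sigma>\<in>configs V. agrees (V - {v}) \<tau> \<sigma> \<and> \<sigma> v = 1} = {\<sigma>\<in>{?s0, ?s1}. \<sigma> v = 1}"
      using A by blast
    also have "\<dots> = {?s1}" using v by (auto simp: s0_def)
    finally show ?thesis .
  qed
  have A2: "{\<sigma>\<in>configs V. agrees (V - {v}) \<tau> \<sigma> \<and> \<sigma> v = -1} = {?s0}"
  proof -
    have "{\<sigma>\<in>configs V. agrees (V - {v}) \<tau> \<sigma> \<and> \<sigma> v = -1} = {\<sigma>\<in>{?s0, ?s1}. \<sigma> v = -1}"
      using A by blast
    also have "\<dots> = {?s0}" using v by (auto simp: s0_def)
    finally show ?thesis .
  qed
  have ps0: "p ?s0 = 1 / Z" unfolding p_def gibbs_def Z_def w_s0 by simp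
  have ps1: "p ?s1 = lam v / Z" unfolding p_def gibbs_def Z_def w_s1[OF v irr] by simp
  have den: "prob_ev V p (agrees (V - {v}) \<tau>) = (1 + lam v) / Z"
    unfolding prob_ev_def A using ne ps0 ps1 by (simp add: add_divide_distrib)
  have n1: "prob_ev V p (\<lambda>\<sigma>. agrees (V - {v}) \<tau> \<sigma> \<and> \<sigma> v = 1) = lam v / Z"
    unfolding prob_ev_def A1 using ps1 by simp
  have n2: "prob_ev V p (\<lambda>\<sigma>. agrees (V - {v}) \<tau> \<sigma> \<and> \<sigma> v = -1) = 1 / Z"
    unfolding prob_ev_def A2 using ps0 by simp
  have feas: "feasible V p (V - {v}) \<tau>" unfolding feasible_def den using lv Z by simp
  have cm1: "cond_marginal V p (V - {v}) \<tau> v 1 = lam v / (1 + lam v)"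
    unfolding cond_marginal_def n1 den using Z by simp
  have cm2: "cond_marginal V p (V - {v}) \<tau> v (-1) = 1 / (1 + lam v)"
    unfolding cond_marginal_def n2 den using Z by simp
  have mbp: "\<And>c. c \<in> {-1,1} \<Longrightarrow> cond_marginal V p (V - {v}) \<tau> v c > 0 \<Longrightarrow> cond_marginal V p (V - {v}) \<tau> v c \<ge> b"
    using mb feas tau v unfolding marginally_bounded_def p_def by blast
  have "cond_marginal V p (V - {v}) \<tau> v 1 \<ge> b"
    by (rule mbp) (use lv in \<open>auto simp: cm1 simp del: cond_marginal_def\<close>)
  then show "b * (1 + lam v) \<le> lam v" using lv by (simp add: cm1 field_simps)
  have "cond_marginal V p (V - {v}) \<tau> v (-1) \<ge> b"
    by (rule mbp) (use lv in \<open>auto simp: cm2 simp del: cond_marginal_def\<close>)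
  then show "b * (1 + lam v) \<le> 1" using lv by (simp add: cm2 field_simps)
qed

lemma occ_mass:
  assumes finV: "finite V" and irr: "\<And>v. \<not> E v v" and sf: "soft V lam"
    and mb: "marginally_bounded V (gibbs V E lam) b" and v: "v \<in> V"
  shows "(\<Sum>\<sigma>\<in>{\<sigma>\<in>configs V. \<sigma> v = 1 \<and> independent E (occupied V \<sigma>)}. gibbs V E lam \<sigma>) \<ge> b"
proof -
  define p where "p = gibbs V E lam"
  define P where "P = {\<sigma>\<in>configs V. \<sigma> v = 1 \<and> independent E (occupied V \<sigma>)}"
  define Q where "Q = {\<sigma>\<in>configs V. True \<and> \<sigma> v = 1}"
  define \<tau> where "\<tau> = (\<lambda>_::'a. undefined::int)"
  have tau: "\<tau> \<in> PiE {} (\<lambda>_. {-1, 1})" unfolding \<tau>_def by simp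
  have ag: "agrees {} \<tau> = (\<lambda>_. True)" by (simp add: agrees_def fun_eq_iff)
  have den: "prob_ev V p (agrees {} \<tau>) = 1"
    unfolding ag prob_ev_def p_def using gibbs_sum[OF finV sf] by simp
  have fQ: "finite Q" unfolding Q_def using fin_configs[OF finV] by simp
  have PQ: "P \<subseteq> Q" unfolding P_def Q_def by auto
  have num: "prob_ev V p (\<lambda>\<sigma>. agrees {} \<tau> \<sigma> \<and> \<sigma> v = 1) = sum p P"
  proof -
    have "prob_ev V p (\<lambda>\<sigma>. agrees {} \<tau> \<sigma> \<and> \<sigma> v = 1) = sum p Q"
      unfolding prob_ev_def ag Q_def by simp
    also have "\<dots> = sum p P"
    proof (rule sum.mono_neutral_right[OF fQ PQ], rule ballI)
      fix \<sigma> assume "\<sigma> \<in> Q - P"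
      then have "\<not> independent E (occupied V \<sigma>)" unfolding P_def Q_def by auto
      then show "p \<sigma> = 0" unfolding p_def gibbs_def by (simp add: w_zero)
    qed
    finally show ?thesis .
  qed
  have s1P: "(s0 V)(v := 1) \<in> P" unfolding P_def using s1_configs[OF v] s1_occ[OF v] irr
    by (auto simp: independent_def)
  have "sum p P > 0"
  proof (rule sum_pos2[OF _ s1P])
    show "finite P" using fQ PQ finite_subset by blast
    show "0 < p ((s0 V)(v := 1))" unfolding p_def using gibbs_pos_iff[OF finV sf] s1P P_def by auto
    show "\<And>i. i \<in> P \<Longrightarrow> 0 \<le> p i" unfolding p_def using gibbs_nonneg[OF finV sf] by auto
  qed
  have feas: "feasible V p {} \<tau>" unfolding feasible_def den by simp
  have cm: "cond_marginal V p {} \<tau> v 1 = sum p P" unfolding cond_marginal_def num den by simp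
  have "cond_marginal V p {} \<tau> v 1 > 0 \<Longrightarrow> cond_marginal V p {} \<tau> v 1 \<ge> b"
    using mb feas tau v unfolding marginally_bounded_def p_def by blast
  then have "b \<le> sum p P" using \<open>sum p P > 0\<close> cm by linarith
  then show ?thesis unfolding P_def p_def .
qed

lemma dtv_bound:
  assumes finV: "finite V" and irr: "\<And>v. \<not> E v v" and sf1: "soft V lam1" and sf2: "soft V lam2"
    and mb1: "marginally_bounded V (gibbs V E lam1) b" and v: "v \<in> V"
    and b: "0 < b" "b \<le> 1" and l2: "lam2 v \<le> 1 / b"
  shows "\<bar>lam2 v - lam1 v\<bar> * b \<le> lam1 v * (2 * d_tv V (gibbs V E lam1) (gibbs V E lam2)) / b"
proof -
  define \<mu> where "\<mu> = gibbs V E lam1"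
  define \<nu> where "\<nu> = gibbs V E lam2"
  define D where "D = d_tv V \<mu> \<nu>"
  define P where "P = {\<sigma>\<in>configs V. \<sigma> v = 1 \<and> independent E (occupied V \<sigma>)}"
  define f where "f = (\<lambda>\<sigma>::'a\<Rightarrow>int. \<sigma>(v := -1))"
  define g where "g = (\<lambda>\<sigma>. \<bar>\<mu> \<sigma> - \<nu> \<sigma>\<bar>)"
  have l1: "lam1 v > 0" "lam2 v > 0" using sf1 sf2 v by (auto simp: soft_def)
  have fin: "finite (configs V)" using fin_configs[OF finV] .
  have PC: "P \<subseteq> configs V" unfolding P_def by auto
  have finP: "finite P" using fin PC finite_subset by blast
  have fC: "f \<sigma> \<in> configs V" if "\<sigma> \<in> P" for \<sigma>
    using that v unfolding P_def f_def configs_def by (auto simp: PiE_iff extensional_def)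
  have occf: "occupied V (f \<sigma>) = occupied V \<sigma> - {v}" for \<sigma>
    unfolding occupied_def f_def by auto
  have wf: "hc_weight V E lam \<sigma> = lam v * hc_weight V E lam (f \<sigma>)" if "\<sigma> \<in> P" for \<sigma> lam
  proof -
    have ind: "independent E (occupied V \<sigma>)" and vin: "v \<in> occupied V \<sigma>"
      using that v unfolding P_def occupied_def by auto
    have ind2: "independent E (occupied V (f \<sigma>))" using ind unfolding occf independent_def by auto
    have fo: "finite (occupied V \<sigma>)" by (rule finite_subset[OF occ_sub finV])
    show ?thesis unfolding hc_weight_def using ind ind2
      by (simp add: occf prod.remove[OF fo vin])
  qed
  have gf: "gibbs V E lam \<sigma> = lam v * gibbs V E lam (f \<sigma>)" if "\<sigma> \<in> P" for \<sigma> lam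
    unfolding gibbs_def wf[OF that] by simp
  have inj: "inj_on f P"
  proof (rule inj_onI)
    fix x y assume "x \<in> P" "y \<in> P" "f x = f y"
    then have xv: "x v = 1" "y v = 1" and fe: "x(v := -1) = y(v := -1)" unfolding P_def f_def by auto
    show "x = y"
    proof (rule ext)
      fix u show "x u = y u"
      proof (cases "u = v")
        case True then show ?thesis using xv by simp
      next
        case False then show ?thesis using fun_cong[OF fe, of u] by simp
      qed
    qed
  qed
  have disj: "P \<inter> f ` P = {}" unfolding P_def f_def by auto
  have g0: "g \<sigma> \<ge> 0" for \<sigma> unfolding g_def by simp
  have sumg: "sum g P + sum (g \<circ> f) P \<le> 2 * D"
  proof -
    have "sum g P + sum (g \<circ> f) P = sum g P + sum g (f ` P)"
      using sum.reindex[OF inj, of g] by simp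
    also have "\<dots> = sum g (P \<union> f ` P)"
      using sum.union_disjoint[OF finP _ disj, of g] finP by simp
    also have "\<dots> \<le> sum g (configs V)"
      by (rule sum_mono2[OF fin]) (use PC fC g0 in auto)
    also have "\<dots> = 2 * D" unfolding D_def d_tv_def g_def by simp
    finally show ?thesis .
  qed
  have pt: "\<bar>lam2 v - lam1 v\<bar> * \<mu> (f \<sigma>) \<le> (1 / b) * (g \<sigma> + g (f \<sigma>))" if "\<sigma> \<in> P" for \<sigma>
  proof -
    have m: "\<mu> \<sigma> = lam1 v * \<mu> (f \<sigma>)" and n: "\<nu> \<sigma> = lam2 v * \<nu> (f \<sigma>)"
      unfolding \<mu>_def \<nu>_def using gf[OF that] by auto
    have mp: "\<mu> (f \<sigma>) \<ge> 0" unfolding \<mu>_def by (rule gibbs_nonneg[OF finV sf1])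
    have e: "(\<nu> \<sigma> - \<mu> \<sigma>) - lam2 v * (\<nu> (f \<sigma>) - \<mu> (f \<sigma>)) = (lam2 v - lam1 v) * \<mu> (f \<sigma>)"
      by (simp add: m n algebra_simps)
    have "\<bar>lam2 v - lam1 v\<bar> * \<mu> (f \<sigma>) = \<bar>(\<nu> \<sigma> - \<mu> \<sigma>) - lam2 v * (\<nu> (f \<sigma>) - \<mu> (f \<sigma>))\<bar>"
      unfolding e using mp by (simp add: abs_mult)
    also have "\<dots> \<le> \<bar>\<nu> \<sigma> - \<mu> \<sigma>\<bar> + lam2 v * \<bar>\<nu> (f \<sigma>) - \<mu> (f \<sigma>)\<bar>"
      using abs_triangle_ineq4[of "\<nu> \<sigma> - \<mu> \<sigma>" "lam2 v * (\<nu> (f \<sigma>) - \<mu> (f \<sigma>))"] l1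
      by (simp add: abs_mult)
    also have "\<dots> \<le> (1 / b) * g \<sigma> + (1 / b) * g (f \<sigma>)"
    proof (rule add_mono)
      have "1 \<le> 1 / b" using b by simp
      then show "\<bar>\<nu> \<sigma> - \<mu> \<sigma>\<bar> \<le> 1 / b * g \<sigma>" unfolding g_def
        using mult_right_mono[of 1 "1/b" "\<bar>\<nu> \<sigma> - \<mu> \<sigma>\<bar>"] by (simp add: abs_minus_commute)
      show "lam2 v * \<bar>\<nu> (f \<sigma>) - \<mu> (f \<sigma>)\<bar> \<le> 1 / b * g (f \<sigma>)" unfolding g_def
        using mult_right_mono[OF l2, of "\<bar>\<nu> (f \<sigma>) - \<mu> (f \<sigma>)\<bar>"] by (simp add: abs_minus_commute)
    qed
    finally show ?thesis by (simp add: algebra_simps)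
  qed
  have S1: "\<bar>lam2 v - lam1 v\<bar> * sum (\<mu> \<circ> f) P \<le> (1 / b) * (2 * D)"
  proof -
    have "\<bar>lam2 v - lam1 v\<bar> * sum (\<mu> \<circ> f) P = (\<Sum>\<sigma>\<in>P. \<bar>lam2 v - lam1 v\<bar> * \<mu> (f \<sigma>))"
      by (simp add: sum_distrib_left)
    also have "\<dots> \<le> (\<Sum>\<sigma>\<in>P. (1 / b) * (g \<sigma> + g (f \<sigma>)))"
      by (rule sum_mono) (rule pt)
    also have "\<dots> = (1 / b) * (sum g P + sum (g \<circ> f) P)"
      by (simp add: sum_distrib_left sum.distrib sum_divide_distrib[symmetric])
    also have "\<dots> \<le> (1 / b) * (2 * D)"
      using sumg b by (intro mult_left_mono) auto
    finally show ?thesis .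
  qed
  have S2: "sum \<mu> P = lam1 v * sum (\<mu> \<circ> f) P"
    unfolding sum_distrib_left \<mu>_def by (rule sum.cong) (auto simp: gf)
  have S3: "sum \<mu> P \<ge> b" using occ_mass[OF finV irr sf1 mb1 v] unfolding \<mu>_def P_def .
  have "\<bar>lam2 v - lam1 v\<bar> * b \<le> \<bar>lam2 v - lam1 v\<bar> * (lam1 v * sum (\<mu> \<circ> f) P)"
    using S2 S3 by (intro mult_left_mono) auto
  also have "\<dots> = lam1 v * (\<bar>lam2 v - lam1 v\<bar> * sum (\<mu> \<circ> f) P)" by simp
  also have "\<dots> \<le> lam1 v * ((1 / b) * (2 * D))"
    using S1 l1 by (intro mult_left_mono) auto
  finally show ?thesis unfolding D_def \<mu>_def \<nu>_def by simp
qed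

lemma pow_upper:
  fixes d :: real
  assumes "d \<ge> 0" "real k * d \<le> 1/2"
  shows "(1 + d) ^ k \<le> 1 + 2 * real k * d"
  using assms(2)
proof (induction k)
  case 0 then show ?case by simp
next
  case (Suc k)
  have kd: "real k * d \<le> 1/2" using Suc.prems assms(1) by (simp add: algebra_simps)
  have "(1 + d) ^ Suc k = (1 + d) * (1 + d) ^ k" by simp
  also have "\<dots> \<le> (1 + d) * (1 + 2 * real k * d)"
    using Suc.IH[OF kd] assms(1) by (intro mult_left_mono) auto
  also have "\<dots> = 1 + (2 * real k + 1) * d + 2 * (real k * d) * d" by (simp add: algebra_simps)
  also have "\<dots> \<le> 1 + (2 * real k + 1) * d + d"
    using mult_right_mono[OF kd assms(1)] by simp
  also have "\<dots> = 1 + 2 * real (Suc k) * d" by (simp add: algebra_simps)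
  finally show ?case .
qed

lemma expect_near:
  fixes p X :: "'b \<Rightarrow> real"
  assumes "finite A" "sum p A = 1" "\<And>x. x \<in> A \<Longrightarrow> p x \<ge> 0"
    "\<And>x. x \<in> A \<Longrightarrow> \<bar>X x - c\<bar> \<le> a"
  shows "\<bar>(\<Sum>x\<in>A. p x * X x) - c\<bar> \<le> a"
proof -
  have "(\<Sum>x\<in>A. p x * (X x - c)) = (\<Sum>x\<in>A. p x * X x) - (\<Sum>x\<in>A. p x) * c"
    by (simp add: right_diff_distrib sum_subtractf sum_distrib_right)
  then have "(\<Sum>x\<in>A. p x * X x) - c = (\<Sum>x\<in>A. p x * (X x - c))"
    using assms(2) by simp
  also have "\<bar>\<dots>\<bar> \<le> (\<Sum>x\<in>A. \<bar>p x * (X x - c)\<bar>)" by (rule sum_abs)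
  also have "\<dots> \<le> (\<Sum>x\<in>A. p x * a)"
    by (rule sum_mono) (use assms(3,4) in \<open>auto simp: abs_mult intro: mult_left_mono\<close>)
  also have "\<dots> = a" using assms(2) by (simp add: sum_distrib_right[symmetric])
  finally show ?thesis .
qed

lemma var_bound:
  fixes p X :: "'b \<Rightarrow> real"
  assumes "sum p A = 1" "\<And>x. x \<in> A \<Longrightarrow> p x \<ge> 0"
    "\<And>x. x \<in> A \<Longrightarrow> \<bar>X x - m\<bar> \<le> c"
  shows "(\<Sum>x\<in>A. p x * (X x - m)^2) \<le> c^2"
proof -
  have "(\<Sum>x\<in>A. p x * (X x - m)^2) \<le> (\<Sum>x\<in>A. p x * c^2)"
  proof (rule sum_mono)
    fix x assume x: "x \<in> A"
    have "(X x - m)^2 \<le> c^2"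
    proof -
      have "\<bar>X x - m\<bar>^2 \<le> c^2" by (rule power_mono) (use assms(3)[OF x] in auto)
      then show ?thesis by simp
    qed
    then show "p x * (X x - m)^2 \<le> p x * c^2" using assms(2)[OF x] by (rule mult_left_mono)
  qed
  also have "\<dots> = c^2" using assms(1) by (simp add: sum_distrib_right[symmetric])
  finally show ?thesis .
qed

theorem lemma6p2:
  fixes V :: "'a set" and E :: "'a \<Rightarrow> 'a \<Rightarrow> bool"
    and lam_mu lam_nu :: "'a \<Rightarrow> real" and b :: real
  assumes finV: "finite V"
    and symE: "\<And>u v. E u v \<Longrightarrow> E v u"
    and irrE: "\<And>v. \<not> E v v"
    and b: "0 < b" "b < 1"
    and soft_mu: "soft V lam_mu" and soft_nu: "soft V lam_nu"
    and mb_mu: "marginally_bounded V (gibbs V E lam_mu) b"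
    and mb_nu: "marginally_bounded V (gibbs V E lam_nu) b"
    and dpar: "d_par V lam_mu lam_nu \<le> b / (2 * (1 - b) * real (card V))"
  defines "\<mu> \<equiv> gibbs V E lam_mu" and "\<nu> \<equiv> gibbs V E lam_nu"
    and "W \<equiv> (\<lambda>\<sigma>. hc_weight V E lam_nu \<sigma> / hc_weight V E lam_mu \<sigma>)"
    and "C \<equiv> b ^ 3"
  shows "(\<forall>\<sigma>\<in>configs V. \<mu> \<sigma> = 0 \<longrightarrow> \<nu> \<sigma> = 0)
       \<and> sqrt (variance V \<mu> W) \<le> (4 * real (card V) / (b * C)) * d_tv V \<mu> \<nu>
       \<and> expect V \<mu> W \<ge> 1 / 2"
proof -
  define n where "n = card V"
  define D where "D = d_tv V \<mu> \<nu>"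
  define r where "r = (\<lambda>v. lam_nu v / lam_mu v)"
  define \<delta> where "\<delta> = min (2 * D / b^2) (1 / (2 * real n))"
  define supp where "supp = {\<sigma>\<in>configs V. \<mu> \<sigma> > 0}"
  have fin: "finite (configs V)" using fin_configs[OF finV] .
  have finS: "finite supp" unfolding supp_def using fin by simp
  have lpos: "lam_mu v > 0" "lam_nu v > 0" if "v \<in> V" for v
    using soft_mu soft_nu that by (auto simp: soft_def)
  have mu0: "\<mu> \<sigma> \<ge> 0" for \<sigma> unfolding \<mu>_def by (rule gibbs_nonneg[OF finV soft_mu])
  have nu0: "\<nu> \<sigma> \<ge> 0" for \<sigma> unfolding \<nu>_def by (rule gibbs_nonneg[OF finV soft_nu])
  have D0: "D \<ge> 0" unfolding D_def d_tv_def by (simp add: sum_nonneg)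
  have d0: "\<delta> \<ge> 0" unfolding \<delta>_def using D0 b by simp
  have part1: "\<forall>\<sigma>\<in>configs V. \<mu> \<sigma> = 0 \<longrightarrow> \<nu> \<sigma> = 0"
  proof (intro ballI impI)
    fix \<sigma> assume "\<mu> \<sigma> = 0"
    then have "\<not> independent E (occupied V \<sigma>)"
      using gibbs_pos_iff[OF finV soft_mu, of E \<sigma>] unfolding \<mu>_def by auto
    then show "\<nu> \<sigma> = 0"
      using gibbs_pos_iff[OF finV soft_nu, of E \<sigma>] nu0[of \<sigma>] unfolding \<nu>_def by auto
  qed
  have bh: "b \<le> 1/2" if ne: "V \<noteq> {}"
  proof -
    obtain v where v: "v \<in> V" using ne by blast
    have "b * (1 + lam_mu v) \<le> lam_mu v" "b * (1 + lam_mu v) \<le> 1"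
      using lam_bounds[OF finV irrE soft_mu mb_mu v] by auto
    then have "(2 * b) * (1 + lam_mu v) \<le> 1 * (1 + lam_mu v)" by (simp add: algebra_simps)
    then have "2 * b \<le> 1" by (rule mult_right_le_imp_le) (use lpos[OF v] in simp)
    then show ?thesis by simp
  qed
  have rb: "\<bar>r v - 1\<bar> \<le> \<delta>" if v: "v \<in> V" for v
  proof -
    have np: "n > 0" unfolding n_def using card_gt_0_iff[of V] v finV by auto
    have l1: "b * (1 + lam_mu v) \<le> lam_mu v" using lam_bounds[OF finV irrE soft_mu mb_mu v] by auto
    have l2: "b * (1 + lam_nu v) \<le> 1" using lam_bounds[OF finV irrE soft_nu mb_nu v] by auto
    have l2': "lam_nu v \<le> 1 / b" using l2 b lpos[OF v] by (simp add: field_simps)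
    have eq: "\<bar>r v - 1\<bar> = \<bar>lam_nu v - lam_mu v\<bar> / lam_mu v"
    proof -
      have "r v - 1 = (lam_nu v - lam_mu v) / lam_mu v"
        unfolding r_def using lpos[OF v] by (simp add: diff_divide_distrib)
      then show ?thesis using lpos[OF v] by (simp add: abs_divide)
    qed
    have c: "\<bar>lam_nu v - lam_mu v\<bar> * b \<le> lam_mu v * (2 * D) / b"
      using dtv_bound[OF finV irrE soft_mu soft_nu mb_mu v b(1) _ l2'] b unfolding D_def \<mu>_def \<nu>_def by simp
    have A: "\<bar>r v - 1\<bar> \<le> 2 * D / b^2"
    proof -
      have "\<bar>lam_nu v - lam_mu v\<bar> * b * b \<le> lam_mu v * (2 * D)"
        using c b by (simp add: field_simps)
      then show ?thesis unfolding eq using lpos[OF v] b by (simp add: field_simps power2_eq_square)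
    qed
    have dp: "\<bar>lam_nu v - lam_mu v\<bar> \<le> b / (2 * (1 - b) * real n)"
    proof -
      have "\<bar>lam_mu v - lam_nu v\<bar> \<le> d_par V lam_mu lam_nu"
        unfolding d_par_def using finV v by (intro Max_ge) auto
      then show ?thesis using dpar unfolding n_def by (simp add: abs_minus_commute)
    qed
    have B: "\<bar>r v - 1\<bar> \<le> 1 / (2 * real n)"
    proof -
      have lm: "lam_mu v * (1 - b) \<ge> b" using l1 by (simp add: algebra_simps)
      have "\<bar>lam_nu v - lam_mu v\<bar> * (2 * (1 - b) * real n) \<le> b"
        using dp b np by (simp add: field_simps)
      also have "\<dots> \<le> lam_mu v * (1 - b)" using lm .
      finally have "(\<bar>lam_nu v - lam_mu v\<bar> * (2 * real n)) * (1 - b) \<le> lam_mu v * (1 - b)"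
        by (simp add: algebra_simps)
      then have "\<bar>lam_nu v - lam_mu v\<bar> * (2 * real n) \<le> lam_mu v"
        by (rule mult_right_le_imp_le) (use b in simp)
      then show ?thesis unfolding eq using lpos[OF v] np by (simp add: field_simps)
    qed
    show ?thesis unfolding \<delta>_def using A B by simp
  qed
  have nd: "real n * \<delta> \<le> 1/2"
  proof (cases "n = 0")
    case True then show ?thesis by simp
  next
    case False
    then have "\<delta> \<le> 1 / (2 * real n)" unfolding \<delta>_def by simp
    then show ?thesis using False by (simp add: field_simps)
  qed
  have dh: "\<delta> \<le> 1/2"
  proof (cases "n = 0")
    case True then show ?thesis unfolding \<delta>_def by simp
  next
    case False
    then have "\<delta> \<le> real n * \<delta>" using mult_right_mono[of 1 "real n" \<delta>] d0 by simp
    then show ?thesis using nd by linarith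
  qed
  have Wb: "\<bar>W \<sigma> - 1\<bar> \<le> 2 * real n * \<delta> \<and> W \<sigma> \<ge> 1/2" if s: "\<sigma> \<in> supp" for \<sigma>
  proof -
    define S where "S = occupied V \<sigma>"
    have SV: "S \<subseteq> V" unfolding S_def by (rule occ_sub)
    have finS': "finite S" using finite_subset[OF SV finV] .
    have kn: "card S \<le> n" unfolding n_def using card_mono[OF finV SV] .
    have ind: "independent E S" using s gibbs_pos_iff[OF finV soft_mu, of E \<sigma>]
      unfolding supp_def S_def \<mu>_def by auto
    have W: "W \<sigma> = prod r S"
      unfolding W_def hc_weight_def S_def[symmetric] r_def using ind by (simp add: prod_dividef)
    have kd: "real (card S) * \<delta> \<le> 1/2"
      using nd kn d0 by (meson mult_right_mono of_nat_le_iff order_trans)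
    have lo: "(1 - \<delta>) ^ card S \<le> prod r S"
    proof -
      have "(\<Prod>v\<in>S. 1 - \<delta>) \<le> prod r S"
        by (rule prod_mono) (use rb SV dh in \<open>fastforce simp: abs_le_iff\<close>)
      then show ?thesis by simp
    qed
    have hi: "prod r S \<le> (1 + \<delta>) ^ card S"
    proof -
      have "prod r S \<le> (\<Prod>v\<in>S. 1 + \<delta>)"
        by (rule prod_mono) (use rb SV dh in \<open>fastforce simp: abs_le_iff\<close>)
      then show ?thesis by simp
    qed
    have bern: "1 + real (card S) * (- \<delta>) \<le> (1 + (- \<delta>)) ^ card S"
      by (rule Bernoulli_inequality) (use dh in simp)
    have pu: "(1 + \<delta>) ^ card S \<le> 1 + 2 * real (card S) * \<delta>" by (rule pow_upper[OF d0 kd])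
    have "real (card S) * \<delta> \<le> real n * \<delta>" using kn d0 by (simp add: mult_right_mono)
    then show ?thesis using lo hi bern pu nd d0 unfolding W by (auto simp: abs_le_iff)
  qed
  have sum1: "sum \<mu> supp = 1"
  proof -
    have "sum \<mu> supp = sum \<mu> (configs V)"
      by (rule sum.mono_neutral_left[OF fin]) (use mu0 in \<open>auto simp: supp_def less_le\<close>)
    then show ?thesis using gibbs_sum[OF finV soft_mu] unfolding \<mu>_def by simp
  qed
  have EW: "expect V \<mu> W = (\<Sum>\<sigma>\<in>supp. \<mu> \<sigma> * W \<sigma>)" unfolding expect_def supp_def ..
  have part3: "expect V \<mu> W \<ge> 1/2"
  proof -
    have "(\<Sum>\<sigma>\<in>supp. \<mu> \<sigma> * (1/2)) \<le> (\<Sum>\<sigma>\<in>supp. \<mu> \<sigma> * W \<sigma>)"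
      by (rule sum_mono, rule mult_left_mono) (use Wb mu0 in auto)
    then show ?thesis unfolding EW using sum1 by (simp add: sum_divide_distrib[symmetric])
  qed
  define m where "m = expect V \<mu> W"
  have m1: "\<bar>m - 1\<bar> \<le> 2 * real n * \<delta>"
    unfolding m_def EW by (rule expect_near[OF finS sum1]) (use mu0 Wb in auto)
  have Wm: "\<bar>W \<sigma> - m\<bar> \<le> 4 * real n * \<delta>" if "\<sigma> \<in> supp" for \<sigma>
    using Wb[OF that] m1 by (simp add: abs_le_iff)
  have var: "variance V \<mu> W \<le> (4 * real n * \<delta>)^2"
    unfolding variance_def m_def[symmetric] unfolding expect_def supp_def[symmetric]
    by (rule var_bound[OF sum1]) (use mu0 Wm in auto)
  have sq: "sqrt (variance V \<mu> W) \<le> 4 * real n * \<delta>"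
  proof -
    have "sqrt (variance V \<mu> W) \<le> sqrt ((4 * real n * \<delta>)^2)" using var by (rule real_sqrt_le_mono)
    then show ?thesis using d0 by simp
  qed
  have fin2: "4 * real n * \<delta> \<le> (4 * real n / (b * C)) * D"
  proof (cases "n = 0")
    case True then show ?thesis by simp
  next
    case False
    then have "V \<noteq> {}" unfolding n_def by auto
    then have bb: "b \<le> 1/2" by (rule bh)
    have "\<delta> \<le> 2 * D / b^2" unfolding \<delta>_def by simp
    also have "\<dots> \<le> D / (b * C)"
    proof -
      have "b * b \<le> (1/2) * (1/2)" using bb b by (intro mult_mono) auto
      then have t: "2 * b^2 \<le> 1" by (simp add: power2_eq_square)
      have e: "2 * D / b^2 = ((2 * b^2) * D) / (b * C)"
        unfolding C_def using b by (simp add: field_simps power2_eq_square power3_eq_cube)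
      have "(2 * b^2) * D \<le> 1 * D" using t D0 by (rule mult_right_mono)
      then have "((2 * b^2) * D) / (b * C) \<le> D / (b * C)"
        unfolding C_def using b by (intro divide_right_mono) auto
      then show ?thesis unfolding e .
    qed
    finally have "\<delta> \<le> D / (b * C)" .
    then have "4 * real n * \<delta> \<le> 4 * real n * (D / (b * C))" by (intro mult_left_mono) auto
    then show ?thesis by simp
  qed
  show ?thesis using part1 part3 sq fin2 unfolding n_def D_def by linarith
qed

end
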